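(* Let $q\ge1$ and assume Hypothesis (H$_q$). Then for every $\theta>0$, $$\Big|\frac16\Big[f(ma)+4f\Big(\frac{m(a+b)}{2}\Big)+f(mb)\Big]-\frac{\Gamma(\theta+1)2^{\theta-1}}{m^\theta(b-a)^\theta}\Big[J^\theta_{(\frac{m(a+b)}{2})^-}f(ma)+J^\theta_{(\frac{m(a+b)}{2})^+}f(mb)\Big]\Big|$$ $$\le\frac{m(b-a)}{4}A_1\big(\theta,\tfrac13\big)^{1-\frac1q}\Big\{\Big(\Big|f'\Big(\frac{m(a+b)}2\Big)\Big|^qA_2\big(\alpha,\theta,\tfrac13\big)+m|f'(a)|^qA_3\big(\alpha,\theta,\tfrac13\big)\Big)^{\frac1q}+\Big(\Big|f'\Big(\frac{m(a+b)}2\Big)\Big|^qA_2\big(\alpha,\theta,\tfrac13\big)+m|f'(b)|^qA_3\big(\alpha,\theta,\tfrac13\big)\Big)^{\frac1q}\Big\}.$$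
   Context: Let $\Gamma$ denote Euler's Gamma function. For $\theta>0$, $c=\frac{m(a+b)}{2}$: $J^\theta_{c^-}f(ma)=\frac{1}{\Gamma(\theta)}\int_{ma}^{c}(s-ma)^{\theta-1}f(s)\,ds$ and $J^\theta_{c^+}f(mb)=\frac{1}{\Gamma(\theta)}\int_{c}^{mb}(mb-s)^{\theta-1}f(s)\,ds$. $(\alpha,m)$-convexity: for $(\alpha,m)\in[0,1]\times(0,1]$ and an interval $K\subseteq[0,\infty)$, a function $g:K\to\mathbb{R}$ is $(\alpha,m)$-convex on $K$ if $g(tX+m(1-t)Y)\le t^\alpha g(X)+m(1-t^\alpha)g(Y)$ for all $X,Y\in K$ and $t\in[0,1]$ with $tX+m(1-t)Y\in K$ (convention $0^0=1$). Hypothesis (H$_q$): $I\subseteq[0,\infty)$ is an interval, $f:I\to\mathbb{R}$ is differentiable on the interior $I^\circ$, $m\in(0,1]$, $\alpha\in[0,1]$, $a<b$ with $ma,b\in I^\circ$, $f'$ is Lebesgue integrable on $[ma,mb]$, and $|f'|^q$ is $(\alpha,m)$-convex on $[ma,b]$. Constants: $A_1(\theta,\lambda)=\frac{2\theta\lambda^{1+\frac1\theta}+1}{\theta+1}-\lambda$, $A_2(\alpha,\theta,\lambda)=\frac{2\theta\lambda^{1+\frac{1+\alpha}{\theta}}}{(\alpha+1)(\alpha+\theta+1)}+\frac{1}{\alpha+\theta+1}-\frac{\lambda}{\alpha+1}$, $A_3(\alpha,\theta,\lambda)=A_1(\theta,\lambda)-A_2(\alpha,\theta,\lambda)$. *)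

theory Defs
  imports "HOL-Analysis.Analysis"
begin

text \<open>Real power with the convention 0^0 = 1 (Isabelle's powr has 0 powr x = 0).\<close>
definition cpow :: "real \<Rightarrow> real \<Rightarrow> real" where
  "cpow t a = (if t = 0 then (if a = 0 then 1 else 0) else t powr a)"

definition alpha_m_convex :: "real \<Rightarrow> real \<Rightarrow> real set \<Rightarrow> (real \<Rightarrow> real) \<Rightarrow> bool" where
  "alpha_m_convex \<alpha> m K g \<longleftrightarrow>
     (\<forall>X\<in>K. \<forall>Y\<in>K. \<forall>t\<in>{0..1}. t * X + m * (1 - t) * Y \<in> K \<longrightarrow>
        g (t * X + m * (1 - t) * Y) \<le> cpow t \<alpha> * g X + m * (1 - cpow t \<alpha>) * g Y)"

definition RL_left :: "real \<Rightarrow> real \<Rightarrow> (real \<Rightarrow> real) \<Rightarrow> real \<Rightarrow> real" where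
  "RL_left \<theta> c f x = (1 / Gamma \<theta>) * (LINT s:{x..c}|lborel. (s - x) powr (\<theta> - 1) * f s)"

definition RL_right :: "real \<Rightarrow> real \<Rightarrow> (real \<Rightarrow> real) \<Rightarrow> real \<Rightarrow> real" where
  "RL_right \<theta> c f x = (1 / Gamma \<theta>) * (LINT s:{c..x}|lborel. (x - s) powr (\<theta> - 1) * f s)"

definition A1 :: "real \<Rightarrow> real \<Rightarrow> real" where
  "A1 \<theta> lam = (2 * \<theta> * lam powr (1 + 1 / \<theta>) + 1) / (\<theta> + 1) - lam"

definition A2 :: "real \<Rightarrow> real \<Rightarrow> real \<Rightarrow> real" where
  "A2 \<alpha> \<theta> lam = 2 * \<theta> * lam powr (1 + (1 + \<alpha>) / \<theta>) / ((\<alpha> + 1) * (\<alpha> + \<theta> + 1))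
      + 1 / (\<alpha> + \<theta> + 1) - lam / (\<alpha> + 1)"

definition A3 :: "real \<Rightarrow> real \<Rightarrow> real \<Rightarrow> real" where
  "A3 \<alpha> \<theta> lam = A1 \<theta> lam - A2 \<alpha> \<theta> lam"

end

theory Submission imports Defs begin


lemma young_aux:
  fixes x l q :: real
  assumes "0 \<le> x" "0 < l" "1 \<le> q"
  shows "x \<le> l * (1 - 1/q) + (1/q) * l powr (1 - q) * x powr q"
proof (cases "q = 1 \<or> x = 0")
  case True
  then show ?thesis using assms by auto
next
  case False
  then have q1: "q > 1" and x0: "x > 0" using assms by auto
  have "l powr (1 - 1/q) * (l powr (1 - q) * x powr q) powr (1/q)
        \<le> (1 - 1/q) * l + (1/q) * (l powr (1 - q) * x powr q)"
    using q1 x0 assms by (intro Youngs_inequality_0) auto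
  moreover have "(l powr (1 - q) * x powr q) powr (1/q) = l powr ((1-q)/q) * x"
    using q1 x0 assms by (simp add: powr_mult powr_powr)
  moreover have e: "l powr (1 - 1/q) * l powr ((1-q)/q) = 1"
  proof -
    have "l powr (1 - 1/q) * l powr ((1-q)/q) = l powr ((1 - 1/q) + (1-q)/q)"
      by (simp add: powr_add)
    also have "(1 - 1/q) + (1-q)/q = 0" using q1 by (simp add: field_simps)
    finally show ?thesis using assms by simp
  qed
  ultimately have "x * (l powr (1 - 1/q) * l powr ((1-q)/q)) \<le> (1 - 1/q) * l + (1/q) * (l powr (1 - q) * x powr q)"
    by (simp add: algebra_simps)
  then show ?thesis using e by (simp add: algebra_simps)
qed



lemma kernel_int:
  fixes \<theta> \<beta> :: real
  assumes th: "\<theta> > 0" and be: "\<beta> \<ge> 0"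
  shows "((\<lambda>t. \<bar>t powr \<theta> - 1/3\<bar> * t powr \<beta>) has_integral A2 \<beta> \<theta> (1/3)) {0..1}"
proof -
  define \<mu> :: real where "\<mu> = (1/3) powr (1/\<theta>)"
  have mu0: "\<mu> > 0" unfolding \<mu>_def by simp
  have mu1: "\<mu> \<le> 1" unfolding \<mu>_def using th by (intro powr_le1) auto
  have muth: "\<mu> powr \<theta> = 1/3" unfolding \<mu>_def using th by (simp add: powr_powr)
  define r where "r = \<mu> powr (\<beta>+1)"
  have r: "r = (1/3) powr ((1+\<beta>)/\<theta>)" unfolding r_def \<mu>_def by (simp add: powr_powr add.commute)
  have mur: "\<mu> powr (\<theta>+\<beta>+1) = r/3"
    unfolding r_def using muth mu0 by (simp add: powr_add add.assoc)
  define G where "G t = (1/3) * t powr (\<beta>+1) / (\<beta>+1) - t powr (\<theta>+\<beta>+1) / (\<theta>+\<beta>+1)" for t :: real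
  define H where "H t = t powr (\<theta>+\<beta>+1) / (\<theta>+\<beta>+1) - (1/3) * t powr (\<beta>+1) / (\<beta>+1)" for t :: real
  have i1: "((\<lambda>t. (1/3) * t powr \<beta> - t powr (\<theta>+\<beta>)) has_integral (G \<mu> - G 0)) {0..\<mu>}"
  proof (rule fundamental_theorem_of_calculus_interior)
    show "0 \<le> \<mu>" using mu0 by simp
    show "continuous_on {0..\<mu>} G" unfolding G_def using th be
      by (intro continuous_intros continuous_on_powr') auto
    fix t assume t: "t \<in> {0<..<\<mu>}"
    show "(G has_vector_derivative (1/3) * t powr \<beta> - t powr (\<theta>+\<beta>)) (at t)"
      unfolding G_def using t th be
      by (auto intro!: derivative_eq_intros simp flip: has_real_derivative_iff_has_vector_derivative
               simp: divide_simps) (simp_all add: algebra_simps)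
  qed
  have i2: "((\<lambda>t. t powr (\<theta>+\<beta>) - (1/3) * t powr \<beta>) has_integral (H 1 - H \<mu>)) {\<mu>..1}"
  proof (rule fundamental_theorem_of_calculus_interior)
    show "\<mu> \<le> 1" using mu1 by simp
    show "continuous_on {\<mu>..1} H" unfolding H_def using th be mu0
      by (intro continuous_intros continuous_on_powr') auto
    fix t assume t: "t \<in> {\<mu><..<1}"
    then have "t > 0" using mu0 by simp
    then show "(H has_vector_derivative t powr (\<theta>+\<beta>) - (1/3) * t powr \<beta>) (at t)"
      unfolding H_def using th be
      by (auto intro!: derivative_eq_intros simp flip: has_real_derivative_iff_has_vector_derivative
               simp: divide_simps) (simp_all add: algebra_simps)
  qed
  have i1': "((\<lambda>t. \<bar>t powr \<theta> - 1/3\<bar> * t powr \<beta>) has_integral (G \<mu> - G 0)) {0..\<mu>}"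
  proof (rule has_integral_spike[OF _ _ i1])
    show "negligible {0::real}" by simp
    fix t assume t: "t \<in> {0..\<mu>} - {0}"
    then have "t powr \<theta> \<le> \<mu> powr \<theta>" using th by (auto intro!: powr_mono2)
    then have "t powr \<theta> \<le> 1/3" using muth by simp
    then show "\<bar>t powr \<theta> - 1/3\<bar> * t powr \<beta> = (1/3) * t powr \<beta> - t powr (\<theta>+\<beta>)"
      by (simp add: powr_add algebra_simps)
  qed
  have i2': "((\<lambda>t. \<bar>t powr \<theta> - 1/3\<bar> * t powr \<beta>) has_integral (H 1 - H \<mu>)) {\<mu>..1}"
  proof (rule has_integral_spike[OF _ _ i2])
    show "negligible {}" by simp
    fix t assume t: "t \<in> {\<mu>..1} - {}"
    then have "\<mu> powr \<theta> \<le> t powr \<theta>" using th mu0 by (auto intro!: powr_mono2)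
    then have "t powr \<theta> \<ge> 1/3" using muth by simp
    then show "\<bar>t powr \<theta> - 1/3\<bar> * t powr \<beta> = t powr (\<theta>+\<beta>) - (1/3) * t powr \<beta>"
      by (simp add: powr_add algebra_simps)
  qed
  have "((\<lambda>t. \<bar>t powr \<theta> - 1/3\<bar> * t powr \<beta>) has_integral (G \<mu> - G 0) + (H 1 - H \<mu>)) {0..1}"
    using has_integral_combine[OF _ _ i1' i2'] mu0 mu1 by simp
  moreover have "(G \<mu> - G 0) + (H 1 - H \<mu>) = A2 \<beta> \<theta> (1/3)"
  proof -
    have p: "(1/3::real) powr (1 + (1+\<beta>)/\<theta>) = (1/3) * r"
      unfolding r by (simp add: powr_add)
    have g0: "G 0 = 0" unfolding G_def using th be by simp
    have h1: "H 1 = 1/(\<theta>+\<beta>+1) - (1/3)/(\<beta>+1)" unfolding H_def by simp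
    have gm: "G \<mu> = (1/3) * r / (\<beta>+1) - (r/3)/(\<theta>+\<beta>+1)" unfolding G_def r_def[symmetric] mur by simp
    have hm: "H \<mu> = (r/3)/(\<theta>+\<beta>+1) - (1/3) * r / (\<beta>+1)" unfolding H_def r_def[symmetric] mur by simp
    have d: "\<beta>+1 \<noteq> 0" "\<theta>+\<beta>+1 \<noteq> 0" "\<beta>+\<theta>+1 \<noteq> 0" using th be by auto
    have e: "1/(\<beta>+1) - 1/(\<theta>+\<beta>+1) = \<theta>/((\<beta>+1)*(\<beta>+\<theta>+1))"
      using d by (simp add: field_simps)
    have "(G \<mu> - G 0) + (H 1 - H \<mu>) = 1/(\<theta>+\<beta>+1) - (1/3)/(\<beta>+1) + 2*(r/3)*(1/(\<beta>+1) - 1/(\<theta>+\<beta>+1))"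
      unfolding g0 h1 gm hm by (simp add: algebra_simps)
    also have "\<dots> = A2 \<beta> \<theta> (1/3)" unfolding A2_def p e by (simp add: algebra_simps)
    finally show ?thesis .
  qed
  ultimately show ?thesis by simp
qed



lemma A1_eq: "A1 \<theta> l = A2 0 \<theta> l"
  unfolding A1_def A2_def by (simp add: add_divide_distrib add.commute)

lemma le_zero_by_eps:
  fixes E C :: real
  assumes "C \<ge> 0" "\<And>l. l > 0 \<Longrightarrow> E \<le> l * C"
  shows "E \<le> 0"
proof (rule ccontr)
  assume "\<not> E \<le> 0"
  then have E: "E > 0" by simp
  define l where "l = E / (2 * (C + 1))"
  have l: "l > 0" using E assms(1) unfolding l_def by simp
  have "l * C < E"
  proof -
    have "l * C \<le> l * (C + 1)" using l by simp
    also have "\<dots> = E / 2" unfolding l_def using assms(1) by (simp add: field_simps)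
    finally show ?thesis using E by simp
  qed
  with assms(2)[OF l] show False by simp
qed

lemma key:
  fixes g D F :: "real \<Rightarrow> real" and \<theta> q \<alpha> m P Q h :: real
  assumes th: "\<theta> > 0" and q: "1 \<le> q" and al: "0 \<le> \<alpha>" "\<alpha> \<le> 1" and m: "m > 0"
    and P: "P \<ge> 0" and Q: "Q \<ge> 0" and h: "h \<ge> 0"
    and gc: "continuous_on {0..1} g"
    and gd: "\<And>t. t \<in> {0<..<1} \<Longrightarrow> (g has_real_derivative D t) (at t)"
    and Db: "\<And>t. t \<in> {0<..<1} \<Longrightarrow> \<bar>D t\<bar> \<le> h * F t"
    and F0: "\<And>t. t \<in> {0<..<1} \<Longrightarrow> F t \<ge> 0"
    and Fb: "\<And>t. t \<in> {0<..<1} \<Longrightarrow> F t powr q \<le> t powr \<alpha> * P + m * (1 - t powr \<alpha>) * Q"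
  shows "\<bar>(2/3) * g 1 + (1/3) * g 0 - \<theta> * integral {0..1} (\<lambda>t. t powr (\<theta>-1) * g t)\<bar>
         \<le> h * A1 \<theta> (1/3) powr (1 - 1/q) * (P * A2 \<alpha> \<theta> (1/3) + m * Q * A3 \<alpha> \<theta> (1/3)) powr (1/q)"
proof -
  define k where "k t = t powr \<theta> - 1/3" for t :: real
  define A where "A = A1 \<theta> (1/3)"
  define B where "B = A2 \<alpha> \<theta> (1/3)"
  define S where "S = P * B + m * Q * (A - B)"
  have S': "P * A2 \<alpha> \<theta> (1/3) + m * Q * A3 \<alpha> \<theta> (1/3) = S"
    unfolding S_def A_def B_def A3_def by simp
  have IA: "((\<lambda>t. \<bar>k t\<bar> * t powr 0) has_integral A) {0..1}"
    unfolding A_def A1_eq k_def using kernel_int[OF th, of 0] by simp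
  have IB: "((\<lambda>t. \<bar>k t\<bar> * t powr \<alpha>) has_integral B) {0..1}"
    unfolding B_def k_def using kernel_int[OF th al(1)] by simp
  have A0: "A \<ge> 0" by (rule has_integral_nonneg[OF IA]) auto
  have B0: "B \<ge> 0" by (rule has_integral_nonneg[OF IB]) auto
  have AB: "A - B \<ge> 0"
  proof (rule has_integral_nonneg[OF has_integral_diff[OF IA IB]])
    fix t :: real assume t: "t \<in> {0..1}"
    show "0 \<le> \<bar>k t\<bar> * t powr 0 - \<bar>k t\<bar> * t powr \<alpha>"
    proof (cases "t = 0")
      case False
      then have "t powr \<alpha> \<le> 1" using t al by (intro powr_le1) auto
      then show ?thesis using False by (simp add: mult_left_le algebra_simps)
    qed simp
  qed
  have S0: "S \<ge> 0" unfolding S_def using P Q B0 AB m by simp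
  have w: "(\<lambda>t. t powr (\<theta>-1)) absolutely_integrable_on {0..1}"
    using has_integral_powr_from_0[of "\<theta>-1" 1] th
    by (intro nonnegative_absolutely_integrable_1) (auto simp: integrable_on_def)
  have "(\<lambda>t. g t * t powr (\<theta>-1)) absolutely_integrable_on {0..1}"
  proof (rule absolutely_integrable_bounded_measurable_product_real[OF _ _ _ w])
    show "g \<in> borel_measurable (lebesgue_on {0..1})"
      by (rule continuous_imp_measurable_on_sets_lebesgue[OF gc]) simp
    show "bounded (g ` {0..1})"
      by (intro compact_imp_bounded compact_continuous_image gc) simp
  qed simp
  then have "(\<lambda>t. t powr (\<theta>-1) * g t) integrable_on {0..1}"
    using set_lebesgue_integral_eq_integral(1) by (simp add: mult.commute)
  then have II: "((\<lambda>t. \<theta> * (t powr (\<theta>-1) * g t)) has_integral \<theta> * integral {0..1} (\<lambda>t. t powr (\<theta>-1) * g t)) {0..1}"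
    by (intro has_integral_mult_right) (simp add: has_integral_integral)
  \<comment> \<open>integration by parts\<close>
  have FT: "((\<lambda>t. \<theta> * (t powr (\<theta>-1) * g t) + k t * D t) has_integral (k 1 * g 1 - k 0 * g 0)) {0..1}"
  proof (rule fundamental_theorem_of_calculus_interior)
    show "continuous_on {0..1} (\<lambda>t. k t * g t)" unfolding k_def using th gc
      by (intro continuous_intros continuous_on_powr') auto
    fix t :: real assume t: "t \<in> {0<..<1}"
    have "((\<lambda>t. k t * g t) has_real_derivative (\<theta> * (t powr (\<theta>-1) * g t) + k t * D t)) (at t)"
      unfolding k_def using t gd[OF t]
      by (auto intro!: derivative_eq_intros simp: algebra_simps)
    then show "((\<lambda>t. k t * g t) has_vector_derivative (\<theta> * (t powr (\<theta>-1) * g t) + k t * D t)) (at t)"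
      by (simp add: has_real_derivative_iff_has_vector_derivative)
  qed simp
  define E where "E = (2/3) * g 1 + (1/3) * g 0 - \<theta> * integral {0..1} (\<lambda>t. t powr (\<theta>-1) * g t)"
  have kk: "k 1 * g 1 - k 0 * g 0 = (2/3) * g 1 + (1/3) * g 0" unfolding k_def using th by simp
  have IE: "((\<lambda>t. k t * D t) has_integral E) {0..1}"
    using has_integral_diff[OF FT II] unfolding kk E_def by simp
  then have IE': "((\<lambda>t. k t * D t) has_integral E) {0<..<1}"
    using has_integral_open_interval[of _ _ "0::real" 1] by auto
  have bound: "\<bar>E\<bar> \<le> h * (l * (1 - 1/q) * A + (1/q) * l powr (1 - q) * S)" if l: "l > 0" for l
  proof -
    define c where "c = (1/q) * l powr (1 - q)"
    define b where "b t = h * ((l * (1 - 1/q) + c * m * Q) * (\<bar>k t\<bar> * t powr 0)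
                     + c * (P - m * Q) * (\<bar>k t\<bar> * t powr \<alpha>))" for t
    have Ib: "(b has_integral h * ((l * (1 - 1/q) + c * m * Q) * A + c * (P - m * Q) * B)) {0..1}"
      unfolding b_def
      by (intro has_integral_mult_right has_integral_add IA IB)
    then have Ib': "(b has_integral h * ((l * (1 - 1/q) + c * m * Q) * A + c * (P - m * Q) * B)) {0<..<1}"
      using has_integral_open_interval[of _ _ "0::real" 1] by auto
    have "norm (integral {0<..<1} (\<lambda>t. k t * D t)) \<le> integral {0<..<1} b"
    proof (rule integral_norm_bound_integral)
      show "(\<lambda>t. k t * D t) integrable_on {0<..<1}" using IE' by blast
      show "b integrable_on {0<..<1}" using Ib' by blast
      fix t :: real assume t: "t \<in> {0<..<1}"
      have y: "F t \<le> l * (1 - 1/q) + (1/q) * l powr (1 - q) * F t powr q"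
        using young_aux[OF F0[OF t] l q] .
      have "(1/q) * l powr (1 - q) * F t powr q \<le> (1/q) * l powr (1 - q) * (t powr \<alpha> * P + m * (1 - t powr \<alpha>) * Q)"
        using Fb[OF t] q by (intro mult_left_mono) auto
      with y have "F t \<le> l * (1 - 1/q) + c * (t powr \<alpha> * P + m * (1 - t powr \<alpha>) * Q)"
        unfolding c_def by simp
      also have "\<dots> = (l * (1 - 1/q) + c * m * Q) + c * (P - m * Q) * t powr \<alpha>"
        by (simp add: algebra_simps)
      finally have Ft: "F t \<le> (l * (1 - 1/q) + c * m * Q) + c * (P - m * Q) * t powr \<alpha>" .
      have "norm (k t * D t) = \<bar>k t\<bar> * \<bar>D t\<bar>" by (simp add: abs_mult)
      also have "\<dots> \<le> \<bar>k t\<bar> * (h * F t)" using Db[OF t] by (intro mult_left_mono) auto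
      also have "\<dots> \<le> \<bar>k t\<bar> * (h * ((l * (1 - 1/q) + c * m * Q) + c * (P - m * Q) * t powr \<alpha>))"
        using Ft h by (intro mult_left_mono) auto
      also have "\<dots> = b t" unfolding b_def using t by (simp add: algebra_simps)
      finally show "norm (k t * D t) \<le> b t" .
    qed
    then have "\<bar>E\<bar> \<le> h * ((l * (1 - 1/q) + c * m * Q) * A + c * (P - m * Q) * B)"
      using integral_unique[OF IE'] integral_unique[OF Ib'] by simp
    also have "\<dots> = h * (l * (1 - 1/q) * A + (1/q) * l powr (1 - q) * S)"
      unfolding S_def c_def by (simp add: algebra_simps diff_divide_distrib add_divide_distrib)
    finally show ?thesis .
  qed
  show ?thesis
  proof (cases "S = 0")
    case True
    have "\<bar>E\<bar> \<le> 0"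
    proof (rule le_zero_by_eps)
      show "0 \<le> h * (1 - 1/q) * A" using h q A0 by (intro mult_nonneg_nonneg) (auto simp: field_simps)
      fix l :: real assume "l > 0"
      from bound[OF this] show "\<bar>E\<bar> \<le> l * (h * (1 - 1/q) * A)" using True by (simp add: algebra_simps)
    qed
    then show ?thesis unfolding S' using True E_def by simp
  next
    case False
    then have Sp: "S > 0" using S0 by simp
    have Ap: "A > 0"
    proof (rule ccontr)
      assume "\<not> A > 0"
      then have "A = 0" using A0 by simp
      then have "B = 0" using B0 AB by simp
      with \<open>A = 0\<close> have "S = 0" unfolding S_def by simp
      with Sp show False by simp
    qed
    define l where "l = (S / A) powr (1/q)"
    have lp: "l > 0" unfolding l_def using Sp Ap by simp
    have q0: "q > 0" using q by simp
    have e1: "l * A = S powr (1/q) * A powr (1 - 1/q)"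
    proof -
      have "A powr (1 - 1/q) = A powr 1 / A powr (1/q)" by (rule powr_diff)
      then have "A powr (1 - 1/q) = A / A powr (1/q)" using Ap by simp
      then show ?thesis unfolding l_def using Sp Ap by (simp add: powr_divide)
    qed
    have e2: "l powr (1 - q) * S = S powr (1/q) * A powr (1 - 1/q)"
    proof -
      have "l powr (1 - q) = (S / A) powr ((1 - q) / q)"
        unfolding l_def using Sp Ap by (simp add: powr_powr)
      also have "\<dots> = S powr ((1 - q)/q) / A powr ((1-q)/q)"
        using Sp Ap by (simp add: powr_divide)
      finally have "l powr (1 - q) * S = S powr ((1 - q)/q) * S powr 1 * (1 / A powr ((1-q)/q))"
        using Sp by simp
      also have "S powr ((1 - q)/q) * S powr 1 = S powr (1/q)"
      proof -
        have "S powr ((1 - q)/q) * S powr 1 = S powr ((1 - q)/q + 1)" by (rule powr_add[symmetric])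
        also have "(1 - q)/q + 1 = 1/q" using q0 by (simp add: field_simps)
        finally show ?thesis .
      qed
      also have "1 / A powr ((1-q)/q) = A powr (1 - 1/q)"
      proof -
        have "1 / A powr ((1-q)/q) = A powr (-((1-q)/q))" by (simp add: powr_minus_divide)
        also have "-((1-q)/q) = 1 - 1/q" using q0 by (simp add: field_simps)
        finally show ?thesis .
      qed
      finally show ?thesis by simp
    qed
    have "\<bar>E\<bar> \<le> h * (l * (1 - 1/q) * A + (1/q) * l powr (1 - q) * S)" using bound[OF lp] .
    also have "l * (1 - 1/q) * A + (1/q) * l powr (1 - q) * S
        = (1 - 1/q) * (l * A) + (1/q) * (l powr (1 - q) * S)" by (simp add: algebra_simps)
    also have "\<dots> = S powr (1/q) * A powr (1 - 1/q)" unfolding e1 e2 by (simp add: algebra_simps)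
    finally show ?thesis unfolding S' E_def A_def by (simp add: algebra_simps)
  qed
qed



lemma lborel_set_integrable_from_abs:
  fixes \<phi> :: "real \<Rightarrow> real"
  assumes "\<phi> absolutely_integrable_on S"
    and "(\<lambda>s. indicator S s *\<^sub>R \<phi> s) \<in> borel_measurable lborel"
  shows "set_integrable lborel S \<phi>"
  using assms unfolding set_integrable_def by (simp add: integrable_completion)

lemma frac_left:
  fixes f :: "real \<Rightarrow> real" and x0 h \<theta> :: real
  assumes h: "h > 0" and th: "\<theta> > 0" and fc: "continuous_on {x0..x0+h} f"
  shows "(LINT s:{x0..x0+h}|lborel. (s-x0) powr (\<theta>-1) * f s)
           = h powr \<theta> * integral {0..1} (\<lambda>t. t powr (\<theta>-1) * f (x0 + t*h))"
proof -
  define \<phi> where "\<phi> s = (s-x0) powr (\<theta>-1) * f s" for s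
  have ker: "((\<lambda>s. (s-x0) powr (\<theta>-1)) has_integral ((x0+h-x0) powr \<theta> / \<theta> - (x0-x0) powr \<theta> / \<theta>)) {x0..x0+h}"
  proof (rule fundamental_theorem_of_calculus_interior)
    show "x0 \<le> x0 + h" using h by simp
    show "continuous_on {x0..x0+h} (\<lambda>s. (s-x0) powr \<theta> / \<theta>)" using th
      by (intro continuous_intros continuous_on_powr') auto
    fix s assume s: "s \<in> {x0<..<x0+h}"
    have "((\<lambda>s. (s-x0) powr \<theta> / \<theta>) has_real_derivative (s-x0) powr (\<theta>-1)) (at s)"
      using s th by (auto intro!: derivative_eq_intros)
    then show "((\<lambda>s. (s-x0) powr \<theta> / \<theta>) has_vector_derivative (s-x0) powr (\<theta>-1)) (at s)"
      by (simp add: has_real_derivative_iff_has_vector_derivative)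
  qed
  have w: "(\<lambda>s. (s-x0) powr (\<theta>-1)) absolutely_integrable_on {x0..x0+h}"
    using ker by (intro nonnegative_absolutely_integrable_1) (auto simp: integrable_on_def)
  have "(\<lambda>s. f s * (s-x0) powr (\<theta>-1)) absolutely_integrable_on {x0..x0+h}"
  proof (rule absolutely_integrable_bounded_measurable_product_real[OF _ _ _ w])
    show "f \<in> borel_measurable (lebesgue_on {x0..x0+h})"
      by (rule continuous_imp_measurable_on_sets_lebesgue[OF fc]) simp
    show "bounded (f ` {x0..x0+h})"
      by (intro compact_imp_bounded compact_continuous_image fc) simp
  qed simp
  then have ai: "\<phi> absolutely_integrable_on {x0..x0+h}" unfolding \<phi>_def by (simp add: mult.commute)
  have meas: "(\<lambda>s. indicator {x0..x0+h} s *\<^sub>R \<phi> s) \<in> borel_measurable lborel"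
  proof -
    have "(\<lambda>s. indicator {x0..x0+h} s *\<^sub>R f s) \<in> borel_measurable borel"
      by (rule borel_measurable_continuous_on_indicator[OF _ fc]) simp
    then have m1: "(\<lambda>s. indicator {x0..x0+h} s *\<^sub>R f s) \<in> borel_measurable lborel" by simp
    have m2: "(\<lambda>s. (s-x0) powr (\<theta>-1)) \<in> borel_measurable lborel" by measurable
    have "(\<lambda>s. (s-x0) powr (\<theta>-1) * (indicator {x0..x0+h} s *\<^sub>R f s)) \<in> borel_measurable lborel"
      using m1 m2 by measurable
    moreover have "(\<lambda>s. (s-x0) powr (\<theta>-1) * (indicator {x0..x0+h} s *\<^sub>R f s)) = (\<lambda>s. indicator {x0..x0+h} s *\<^sub>R \<phi> s)"
      unfolding \<phi>_def by (auto simp: indicator_def)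
    ultimately show ?thesis by simp
  qed
  have si: "set_integrable lborel {x0..x0+h} \<phi>" by (rule lborel_set_integrable_from_abs[OF ai meas])
  have L: "(LINT s:{x0..x0+h}|lborel. \<phi> s) = integral {x0..x0+h} \<phi>"
    using set_borel_integral_eq_integral(2)[OF si] .
  have "\<phi> integrable_on {x0..x0+h}" using set_borel_integral_eq_integral(1)[OF si] .
  then have "(\<phi> has_integral integral {x0..x0+h} \<phi>) (cbox x0 (x0+h))" by (simp add: has_integral_integral)
  from has_integral_affinity'[OF this h, of x0]
  have "((\<lambda>t. \<phi> (h * t + x0)) has_integral integral {x0..x0+h} \<phi> / h) {0..1}"
    using h by (simp add: divide_simps)
  then have "((\<lambda>t. h powr (\<theta>-1) * (t powr (\<theta>-1) * f (x0 + t*h))) has_integral integral {x0..x0+h} \<phi> / h) {0..1}"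
  proof (rule has_integral_eq[rotated])
    fix t :: real assume t: "t \<in> {0..1}"
    show "\<phi> (h * t + x0) = h powr (\<theta>-1) * (t powr (\<theta>-1) * f (x0 + t*h))"
      unfolding \<phi>_def using t h by (simp add: powr_mult algebra_simps)
  qed
  then have "((\<lambda>t. t powr (\<theta>-1) * f (x0 + t*h)) has_integral integral {x0..x0+h} \<phi> / h / h powr (\<theta>-1)) {0..1}"
    using h by (subst (asm) has_integral_mult_right_iff) auto
  then have "integral {0..1} (\<lambda>t. t powr (\<theta>-1) * f (x0 + t*h)) = integral {x0..x0+h} \<phi> / h / h powr (\<theta>-1)"
    by (rule integral_unique)
  moreover have "h powr \<theta> = h * h powr (\<theta>-1)" using h by (simp add: powr_diff)
  ultimately show ?thesis using L h unfolding \<phi>_def by (simp add: field_simps)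
qed


lemma frac_right:
  fixes f :: "real \<Rightarrow> real" and x1 h \<theta> :: real
  assumes h: "h > 0" and th: "\<theta> > 0" and fc: "continuous_on {x1-h..x1} f"
  shows "(LINT s:{x1-h..x1}|lborel. (x1-s) powr (\<theta>-1) * f s)
           = h powr \<theta> * integral {0..1} (\<lambda>t. t powr (\<theta>-1) * f (x1 - t*h))"
proof -
  define \<phi> where "\<phi> s = (x1-s) powr (\<theta>-1) * f s" for s
  have ker: "((\<lambda>s. (x1-s) powr (\<theta>-1)) has_integral (- ((x1-x1) powr \<theta> / \<theta>) - - ((x1-(x1-h)) powr \<theta> / \<theta>))) {x1-h..x1}"
  proof (rule fundamental_theorem_of_calculus_interior)
    show "x1 - h \<le> x1" using h by simp
    show "continuous_on {x1-h..x1} (\<lambda>s. - ((x1-s) powr \<theta> / \<theta>))" using th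
      by (intro continuous_intros continuous_on_powr') auto
    fix s assume s: "s \<in> {x1-h<..<x1}"
    have "((\<lambda>s. - ((x1-s) powr \<theta> / \<theta>)) has_real_derivative (x1-s) powr (\<theta>-1)) (at s)"
      using s th by (auto intro!: derivative_eq_intros)
    then show "((\<lambda>s. - ((x1-s) powr \<theta> / \<theta>)) has_vector_derivative (x1-s) powr (\<theta>-1)) (at s)"
      by (simp add: has_real_derivative_iff_has_vector_derivative)
  qed
  have w: "(\<lambda>s. (x1-s) powr (\<theta>-1)) absolutely_integrable_on {x1-h..x1}"
    using ker by (intro nonnegative_absolutely_integrable_1) (auto simp: integrable_on_def)
  have "(\<lambda>s. f s * (x1-s) powr (\<theta>-1)) absolutely_integrable_on {x1-h..x1}"
  proof (rule absolutely_integrable_bounded_measurable_product_real[OF _ _ _ w])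
    show "f \<in> borel_measurable (lebesgue_on {x1-h..x1})"
      by (rule continuous_imp_measurable_on_sets_lebesgue[OF fc]) simp
    show "bounded (f ` {x1-h..x1})"
      by (intro compact_imp_bounded compact_continuous_image fc) simp
  qed simp
  then have ai: "\<phi> absolutely_integrable_on {x1-h..x1}" unfolding \<phi>_def by (simp add: mult.commute)
  have meas: "(\<lambda>s. indicator {x1-h..x1} s *\<^sub>R \<phi> s) \<in> borel_measurable lborel"
  proof -
    have "(\<lambda>s. indicator {x1-h..x1} s *\<^sub>R f s) \<in> borel_measurable borel"
      by (rule borel_measurable_continuous_on_indicator[OF _ fc]) simp
    then have m1: "(\<lambda>s. indicator {x1-h..x1} s *\<^sub>R f s) \<in> borel_measurable lborel" by simp
    have m2: "(\<lambda>s. (x1-s) powr (\<theta>-1)) \<in> borel_measurable lborel" by measurable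
    have "(\<lambda>s. (x1-s) powr (\<theta>-1) * (indicator {x1-h..x1} s *\<^sub>R f s)) \<in> borel_measurable lborel"
      using m1 m2 by measurable
    moreover have "(\<lambda>s. (x1-s) powr (\<theta>-1) * (indicator {x1-h..x1} s *\<^sub>R f s)) = (\<lambda>s. indicator {x1-h..x1} s *\<^sub>R \<phi> s)"
      unfolding \<phi>_def by (auto simp: indicator_def)
    ultimately show ?thesis by simp
  qed
  have si: "set_integrable lborel {x1-h..x1} \<phi>" by (rule lborel_set_integrable_from_abs[OF ai meas])
  have L: "(LINT s:{x1-h..x1}|lborel. \<phi> s) = integral {x1-h..x1} \<phi>"
    using set_borel_integral_eq_integral(2)[OF si] .
  have "\<phi> integrable_on {x1-h..x1}" using set_borel_integral_eq_integral(1)[OF si] .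
  then have "(\<phi> has_integral integral {x1-h..x1} \<phi>) (cbox (x1-h) x1)" by (simp add: has_integral_integral)
  from has_integral_affinity[OF this, of "-h" x1] h
  have aff: "((\<lambda>t. \<phi> (-h * t + x1)) has_integral integral {x1-h..x1} \<phi> / h)
      ((\<lambda>x. (1 / -h) * x + - ((1 / -h) * x1)) ` {x1-h..x1})"
    by (simp add: divide_simps)
  have img: "((\<lambda>x. (1 / -h) * x + - ((1 / -h) * x1)) ` {x1-h..x1}) = {0..1}"
  proof (rule set_eqI, rule iffI)
    fix t assume "t \<in> (\<lambda>x. (1 / -h) * x + - ((1 / -h) * x1)) ` {x1-h..x1}"
    then obtain x where x: "x \<in> {x1-h..x1}" "t = (1 / -h) * x + - ((1 / -h) * x1)" by auto
    then have "t = (x1 - x) / h" using h by (simp add: field_simps)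
    then show "t \<in> {0..1}" using x h by (auto simp: field_simps zero_le_mult_iff)
  next
    fix t :: real assume t: "t \<in> {0..1}"
    have "t = (1 / -h) * (x1 - t*h) + - ((1 / -h) * x1)" using h by (simp add: field_simps)
    moreover have "x1 - t*h \<in> {x1-h..x1}" using t h by (auto simp: mult_left_le_one_le)
    ultimately show "t \<in> (\<lambda>x. (1 / -h) * x + - ((1 / -h) * x1)) ` {x1-h..x1}" by blast
  qed
  have "((\<lambda>t. \<phi> (-h * t + x1)) has_integral integral {x1-h..x1} \<phi> / h) {0..1}"
    using aff unfolding img .
  then have "((\<lambda>t. h powr (\<theta>-1) * (t powr (\<theta>-1) * f (x1 - t*h))) has_integral integral {x1-h..x1} \<phi> / h) {0..1}"
  proof (rule has_integral_eq[rotated])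
    fix t :: real assume t: "t \<in> {0..1}"
    show "\<phi> (-h * t + x1) = h powr (\<theta>-1) * (t powr (\<theta>-1) * f (x1 - t*h))"
      unfolding \<phi>_def using t h by (simp add: powr_mult algebra_simps)
  qed
  then have "((\<lambda>t. t powr (\<theta>-1) * f (x1 - t*h)) has_integral integral {x1-h..x1} \<phi> / h / h powr (\<theta>-1)) {0..1}"
    using h by (subst (asm) has_integral_mult_right_iff) auto
  then have "integral {0..1} (\<lambda>t. t powr (\<theta>-1) * f (x1 - t*h)) = integral {x1-h..x1} \<phi> / h / h powr (\<theta>-1)"
    by (rule integral_unique)
  moreover have "h powr \<theta> = h * h powr (\<theta>-1)" using h by (simp add: powr_diff)
  ultimately show ?thesis using L h unfolding \<phi>_def by (simp add: field_simps)
qed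



theorem mainTheorem5:
  fixes f :: "real \<Rightarrow> real" and I :: "real set"
    and m \<alpha> a b q \<theta> :: real
  assumes "is_interval I" and "I \<subseteq> {0..}"
    and "\<forall>x\<in>interior I. f differentiable (at x)"
    and "0 < m" and "m \<le> 1" and "0 \<le> \<alpha>" and "\<alpha> \<le> 1"
    and "a < b" and "m * a \<in> interior I" and "b \<in> interior I"
    and "set_integrable lborel {m * a..m * b} (deriv f)"
    and "alpha_m_convex \<alpha> m {m * a..b} (\<lambda>x. \<bar>deriv f x\<bar> powr q)"
    and "1 \<le> q"
    and "0 < \<theta>"
  shows "\<bar>(1/6) * (f (m * a) + 4 * f (m * (a + b) / 2) + f (m * b))
           - Gamma (\<theta> + 1) * 2 powr (\<theta> - 1) / (m powr \<theta> * (b - a) powr \<theta>)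
             * (RL_left \<theta> (m * (a + b) / 2) f (m * a) + RL_right \<theta> (m * (a + b) / 2) f (m * b))\<bar>
         \<le> m * (b - a) / 4 * A1 \<theta> (1/3) powr (1 - 1 / q)
           * ((\<bar>deriv f (m * (a + b) / 2)\<bar> powr q * A2 \<alpha> \<theta> (1/3)
                 + m * \<bar>deriv f a\<bar> powr q * A3 \<alpha> \<theta> (1/3)) powr (1 / q)
            + (\<bar>deriv f (m * (a + b) / 2)\<bar> powr q * A2 \<alpha> \<theta> (1/3)
                 + m * \<bar>deriv f b\<bar> powr q * A3 \<alpha> \<theta> (1/3)) powr (1 / q))"
proof -
  note assms' = assms
  have m0: "m > 0" and m1: "m \<le> 1" and ab: "a < b" and th: "\<theta> > 0" and q: "1 \<le> q"
    and al: "0 \<le> \<alpha>" "\<alpha> \<le> 1" using assms by auto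
  define c where "c = m * (a + b) / 2"
  define h where "h = m * (b - a) / 2"
  have h0: "h > 0" unfolding h_def using m0 ab by simp
  have ma0: "m * a \<ge> 0" using assms(2,9) interior_subset by fastforce
  then have a0: "a \<ge> 0" using m0 by (simp add: zero_le_mult_iff)
  have b0: "b \<ge> 0" using a0 ab by simp
  have cma: "c = m * a + h" unfolding c_def h_def by (simp add: field_simps add_divide_distrib[symmetric])
  have cmb: "c = m * b - h" unfolding c_def h_def by (simp add: field_simps add_divide_distrib[symmetric])
  have mbb: "m * b \<le> b" using mult_left_le_one_le[of b m] m1 b0 m0 by simp
  have maa: "m * a \<le> a" using mult_left_le_one_le[of a m] m1 a0 m0 by simp
  have cb: "c \<le> b" using cmb mbb h0 by simp
  have ivI: "is_interval (interior I)"
    using assms(1) by (simp add: is_interval_convex_1)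
  have inI: "x \<in> interior I" if "m * a \<le> x" "x \<le> b" for x
    using ivI assms(9,10) that unfolding is_interval_1 by blast
  have der: "(f has_real_derivative deriv f x) (at x)" if "m * a \<le> x" "x \<le> b" for x
    using assms(3) inI[OF that] by (simp add: DERIV_deriv_iff_real_differentiable)
  have cont: "isCont f x" if "m * a \<le> x" "x \<le> b" for x
    using der[OF that] by (rule DERIV_isCont)
  have convx: "\<bar>deriv f (t * X + m * (1 - t) * Y)\<bar> powr q
      \<le> cpow t \<alpha> * \<bar>deriv f X\<bar> powr q + m * (1 - cpow t \<alpha>) * \<bar>deriv f Y\<bar> powr q"
    if "X \<in> {m*a..b}" "Y \<in> {m*a..b}" "t \<in> {0..1}" "t * X + m * (1 - t) * Y \<in> {m*a..b}" for X Y t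
    using assms(12) that unfolding alpha_m_convex_def by blast
  have cK: "c \<in> {m*a..b}" using cma h0 cb by simp
  have aK: "a \<in> {m*a..b}" using maa ab by simp
  have bK: "b \<in> {m*a..b}" using mbb ab m0 maa by simp
  define P where "P = \<bar>deriv f c\<bar> powr q"
  define A where "A = A1 \<theta> (1/3) powr (1 - 1/q)"
  define J1 where "J1 = integral {0..1} (\<lambda>t. t powr (\<theta>-1) * f (m * a + t*h))"
  have E1: "\<bar>(2/3) * f c + (1/3) * f (m*a) - \<theta> * J1\<bar>
     \<le> h * A * (P * A2 \<alpha> \<theta> (1/3) + m * \<bar>deriv f a\<bar> powr q * A3 \<alpha> \<theta> (1/3)) powr (1/q)"
  proof -
    have "\<bar>(2/3) * (\<lambda>t. f (m * a + t*h)) 1 + (1/3) * (\<lambda>t. f (m * a + t*h)) 0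
            - \<theta> * integral {0..1} (\<lambda>t. t powr (\<theta>-1) * (\<lambda>t. f (m * a + t*h)) t)\<bar>
       \<le> h * A1 \<theta> (1/3) powr (1 - 1/q) * (P * A2 \<alpha> \<theta> (1/3) + m * \<bar>deriv f a\<bar> powr q * A3 \<alpha> \<theta> (1/3)) powr (1/q)"
    proof (rule key[OF th q al m0 _ _ less_imp_le[OF h0], where D = "\<lambda>t. deriv f (m * a + t*h) * h"
                     and F = "\<lambda>t. \<bar>deriv f (m * a + t*h)\<bar>"])
      show "0 \<le> P" unfolding P_def by simp
      show "0 \<le> \<bar>deriv f a\<bar> powr q" by simp
      show "continuous_on {0..1} (\<lambda>t. f (m * a + t*h))"
      proof (intro continuous_at_imp_continuous_on ballI)
        fix t :: real assume t: "t \<in> {0..1}"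
        have tt: "t * h \<le> h" "0 \<le> t * h" using t h0 by (auto intro: mult_left_le_one_le)
        have "isCont f (m * a + t*h)" using tt cma cb by (intro cont) linarith+
        moreover have "isCont (\<lambda>t. m * a + t*h) t" by (intro continuous_intros)
        ultimately show "isCont (\<lambda>t. f (m * a + t*h)) t" using isCont_o2 by blast
      qed
      fix t :: real assume t: "t \<in> {0<..<1}"
      have tt: "t * h \<le> h" "0 \<le> t * h" using t h0 by (auto intro: mult_left_le_one_le)
      have rng: "m * a \<le> m * a + t*h" "m * a + t*h \<le> b" using tt cma cb by linarith+
      show "((\<lambda>t. f (m * a + t*h)) has_real_derivative deriv f (m * a + t*h) * h) (at t)"
        using der[OF rng] by (auto intro!: derivative_eq_intros DERIV_chain2[where f = f])
      show "\<bar>deriv f (m * a + t*h) * h\<bar> \<le> h * \<bar>deriv f (m * a + t*h)\<bar>" using h0 by (simp add: abs_mult)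
      show "0 \<le> \<bar>deriv f (m * a + t*h)\<bar>" by simp
      have pt: "t * c + m * (1 - t) * a = m * a + t * h" unfolding cma by (simp add: algebra_simps)
      have "\<bar>deriv f (t * c + m * (1 - t) * a)\<bar> powr q
         \<le> cpow t \<alpha> * \<bar>deriv f c\<bar> powr q + m * (1 - cpow t \<alpha>) * \<bar>deriv f a\<bar> powr q"
        using t rng by (intro convx cK aK) (auto simp: pt)
      then show "\<bar>deriv f (m * a + t*h)\<bar> powr q \<le> t powr \<alpha> * P + m * (1 - t powr \<alpha>) * \<bar>deriv f a\<bar> powr q"
        using t unfolding pt P_def cpow_def by simp
    qed
    then show ?thesis unfolding J1_def A_def using cma by simp
  qed
  define J2 where "J2 = integral {0..1} (\<lambda>t. t powr (\<theta>-1) * f (m * b - t*h))"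
  have E2: "\<bar>(2/3) * f c + (1/3) * f (m*b) - \<theta> * J2\<bar>
     \<le> h * A * (P * A2 \<alpha> \<theta> (1/3) + m * \<bar>deriv f b\<bar> powr q * A3 \<alpha> \<theta> (1/3)) powr (1/q)"
  proof -
    have "\<bar>(2/3) * (\<lambda>t. f (m * b - t*h)) 1 + (1/3) * (\<lambda>t. f (m * b - t*h)) 0
            - \<theta> * integral {0..1} (\<lambda>t. t powr (\<theta>-1) * (\<lambda>t. f (m * b - t*h)) t)\<bar>
       \<le> h * A1 \<theta> (1/3) powr (1 - 1/q) * (P * A2 \<alpha> \<theta> (1/3) + m * \<bar>deriv f b\<bar> powr q * A3 \<alpha> \<theta> (1/3)) powr (1/q)"
    proof (rule key[OF th q al m0 _ _ less_imp_le[OF h0], where D = "\<lambda>t. deriv f (m * b - t*h) * (-h)"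
                     and F = "\<lambda>t. \<bar>deriv f (m * b - t*h)\<bar>"])
      show "0 \<le> P" unfolding P_def by simp
      show "0 \<le> \<bar>deriv f b\<bar> powr q" by simp
      show "continuous_on {0..1} (\<lambda>t. f (m * b - t*h))"
      proof (intro continuous_at_imp_continuous_on ballI)
        fix t :: real assume t: "t \<in> {0..1}"
        have tt: "t * h \<le> h" "0 \<le> t * h" using t h0 by (auto intro: mult_left_le_one_le)
        have "isCont f (m * b - t*h)" using tt cma cmb mbb by (intro cont) linarith+
        moreover have "isCont (\<lambda>t. m * b - t*h) t" by (intro continuous_intros)
        ultimately show "isCont (\<lambda>t. f (m * b - t*h)) t" using isCont_o2 by blast
      qed
      fix t :: real assume t: "t \<in> {0<..<1}"
      have tt: "t * h \<le> h" "0 \<le> t * h" using t h0 by (auto intro: mult_left_le_one_le)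
      have rng: "m * a \<le> m * b - t*h" "m * b - t*h \<le> b" using tt cma cmb mbb by linarith+
      show "((\<lambda>t. f (m * b - t*h)) has_real_derivative deriv f (m * b - t*h) * (-h)) (at t)"
      proof -
        have inner: "((\<lambda>t. m * b - t*h) has_real_derivative -h) (at t)"
          by (auto intro!: derivative_eq_intros)
        show ?thesis using DERIV_chain2[OF der[OF rng] inner] by simp
      qed
      show "\<bar>deriv f (m * b - t*h) * (-h)\<bar> \<le> h * \<bar>deriv f (m * b - t*h)\<bar>" using h0 by (simp add: abs_mult)
      show "0 \<le> \<bar>deriv f (m * b - t*h)\<bar>" by simp
      have pt: "t * c + m * (1 - t) * b = m * b - t * h" unfolding cmb by (simp add: algebra_simps)
      have "\<bar>deriv f (t * c + m * (1 - t) * b)\<bar> powr q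
         \<le> cpow t \<alpha> * \<bar>deriv f c\<bar> powr q + m * (1 - cpow t \<alpha>) * \<bar>deriv f b\<bar> powr q"
        using t rng by (intro convx cK bK) (auto simp: pt)
      then show "\<bar>deriv f (m * b - t*h)\<bar> powr q \<le> t powr \<alpha> * P + m * (1 - t powr \<alpha>) * \<bar>deriv f b\<bar> powr q"
        using t unfolding pt P_def cpow_def by simp
    qed
    then show ?thesis unfolding J2_def A_def using cmb by simp
  qed
  have fc1: "continuous_on {m*a..m*a+h} f"
    using cont cma cb by (intro continuous_at_imp_continuous_on ballI) auto
  have fc2: "continuous_on {m*b-h..m*b} f"
    using cont cma cmb mbb h0 by (intro continuous_at_imp_continuous_on ballI) auto
  have Gp: "Gamma \<theta> > 0" using th by (rule Gamma_real_pos)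
  have RL1: "RL_left \<theta> c f (m * a) = h powr \<theta> * J1 / Gamma \<theta>"
    unfolding RL_left_def J1_def cma using frac_left[OF h0 th fc1] by simp
  have RL2: "RL_right \<theta> c f (m * b) = h powr \<theta> * J2 / Gamma \<theta>"
    unfolding RL_right_def J2_def cmb using frac_right[OF h0 th fc2] by simp
  have hp: "h powr \<theta> > 0" using h0 by simp
  have coef: "Gamma (\<theta> + 1) * 2 powr (\<theta> - 1) / (m powr \<theta> * (b - a) powr \<theta>) = \<theta> * Gamma \<theta> / (2 * h powr \<theta>)"
  proof -
    have M: "m powr \<theta> * (b - a) powr \<theta> = h powr \<theta> * 2 powr \<theta>"
      unfolding h_def using m0 ab by (simp add: powr_mult powr_divide)
    have T: "2 powr (\<theta> - 1) = 2 powr \<theta> / 2" by (simp add: powr_diff)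
    have G: "Gamma (\<theta> + 1) = \<theta> * Gamma \<theta>" by (rule Gamma_plus1) (use th in \<open>auto elim!: nonpos_Ints_cases\<close>)
    have p2: "2 powr \<theta> > (0::real)" by simp
    show ?thesis unfolding M T G using hp p2 by (simp add: field_simps)
  qed
  have LHS: "(1/6) * (f (m * a) + 4 * f c + f (m * b))
           - Gamma (\<theta> + 1) * 2 powr (\<theta> - 1) / (m powr \<theta> * (b - a) powr \<theta>)
             * (RL_left \<theta> c f (m * a) + RL_right \<theta> c f (m * b))
      = (1/2) * (((2/3) * f c + (1/3) * f (m*a) - \<theta> * J1) + ((2/3) * f c + (1/3) * f (m*b) - \<theta> * J2))"
    unfolding coef RL1 RL2 using Gp hp by (simp add: field_simps)
  have "\<bar>(1/6) * (f (m * a) + 4 * f c + f (m * b))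
           - Gamma (\<theta> + 1) * 2 powr (\<theta> - 1) / (m powr \<theta> * (b - a) powr \<theta>)
             * (RL_left \<theta> c f (m * a) + RL_right \<theta> c f (m * b))\<bar>
      \<le> (1/2) * (h * A * (P * A2 \<alpha> \<theta> (1/3) + m * \<bar>deriv f a\<bar> powr q * A3 \<alpha> \<theta> (1/3)) powr (1/q)
                + h * A * (P * A2 \<alpha> \<theta> (1/3) + m * \<bar>deriv f b\<bar> powr q * A3 \<alpha> \<theta> (1/3)) powr (1/q))"
    unfolding LHS using E1 E2 by (simp add: abs_mult) 
  also have "\<dots> = m * (b - a) / 4 * A
           * ((P * A2 \<alpha> \<theta> (1/3) + m * \<bar>deriv f a\<bar> powr q * A3 \<alpha> \<theta> (1/3)) powr (1 / q)
            + (P * A2 \<alpha> \<theta> (1/3) + m * \<bar>deriv f b\<bar> powr q * A3 \<alpha> \<theta> (1/3)) powr (1 / q))"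
    unfolding h_def by (simp add: field_simps)
  finally show ?thesis unfolding c_def[symmetric] P_def A_def by simp
qed


end
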